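(* Let $N,S,d\ge 1$ be integers and let $\pi$ be a next-token distribution on $[N]^S$ such that $\pi(t_{S+1}\mid t_{1:S})\neq 0$ for all $t_{1:S}\in[N]^S$ and $t_{S+1}\in[N]$ (all conditional distributions have full support). Then there exists $f\in\mathcal{L}(N,S,d)$ such that $d_{KL}(\pi,f)=d_{KL}(\pi,\mathcal{L}(N,S,d))$.
   Context: $[N]=\{1,\dots,N\}$. A next-token distribution $\pi$ consists of a prior probability distribution on $[N]^S$ together with, for each $t_{1:S}\in[N]^S$, a conditional probability distribution $\pi_{t_{1:S}}=\pi(\cdot\mid t_{1:S})$ on $[N]$. For $f:[N]^S\to\mathbb{R}^N$, $d_{KL}(\pi,f):=\mathbb{E}_{t_{1:S}\sim\pi}\big[\mathrm{KL}(\pi_{t_{1:S}}\,\|\,\mathrm{Softmax}(f(t_{1:S})))\big]$. The set of sequence encoders is $\mathcal{L}(N,S,d):=\{f_{W,E}: W\in\mathbb{R}^{N\times d},\ E:[N]^S\to\mathbb{R}^d\}$ with $f_{W,E}(t_{1:S})=W E(t_{1:S})$, and $d_{KL}(\pi,\mathcal{L}(N,S,d)):=\inf_{f\in\mathcal{L}(N,S,d)}d_{KL}(\pi,f)$. *)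

theory Defs
  imports Complex_Main
begin

definition ctxs :: "nat \<Rightarrow> nat \<Rightarrow> nat list set" where
  "ctxs N S = {t. length t = S \<and> set t \<subseteq> {1..N}}"

text \<open>A next-token distribution: a prior p on [N]^S and conditionals q t on [N].\<close>
definition next_token_dist :: "nat \<Rightarrow> nat \<Rightarrow> (nat list \<Rightarrow> real) \<Rightarrow> (nat list \<Rightarrow> nat \<Rightarrow> real) \<Rightarrow> bool" where
  "next_token_dist N S p q \<longleftrightarrow>
     (\<forall>t\<in>ctxs N S. p t \<ge> 0) \<and> (\<Sum>t\<in>ctxs N S. p t) = 1 \<and>
     (\<forall>t\<in>ctxs N S. (\<forall>j\<in>{1..N}. q t j \<ge> 0) \<and> (\<Sum>j\<in>{1..N}. q t j) = 1)"

definition softmax :: "nat \<Rightarrow> (nat \<Rightarrow> real) \<Rightarrow> nat \<Rightarrow> real" where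
  "softmax N v i = exp (v i) / (\<Sum>j\<in>{1..N}. exp (v j))"

definition KL :: "nat \<Rightarrow> (nat \<Rightarrow> real) \<Rightarrow> (nat \<Rightarrow> real) \<Rightarrow> real" where
  "KL N a b = (\<Sum>i\<in>{1..N}. if a i = 0 then 0 else a i * ln (a i / b i))"

definition dKL :: "nat \<Rightarrow> nat \<Rightarrow> (nat list \<Rightarrow> real) \<Rightarrow> (nat list \<Rightarrow> nat \<Rightarrow> real)
                   \<Rightarrow> (nat list \<Rightarrow> nat \<Rightarrow> real) \<Rightarrow> real" where
  "dKL N S p q f = (\<Sum>t\<in>ctxs N S. p t * KL N (q t) (softmax N (f t)))"

text \<open>f_{W,E}(t) = W E(t), W an N x d matrix (entries W i k, i in 1..N, k in 1..d), E(t) in R^d.\<close>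
definition f_WE :: "nat \<Rightarrow> (nat \<Rightarrow> nat \<Rightarrow> real) \<Rightarrow> (nat list \<Rightarrow> nat \<Rightarrow> real) \<Rightarrow> nat list \<Rightarrow> nat \<Rightarrow> real" where
  "f_WE d W E t i = (\<Sum>k\<in>{1..d}. W i k * E t k)"

definition seq_encoders :: "nat \<Rightarrow> nat \<Rightarrow> nat \<Rightarrow> (nat list \<Rightarrow> nat \<Rightarrow> real) set" where
  "seq_encoders N S d = {f_WE d W E | W E. True}"

definition dKL_set :: "nat \<Rightarrow> nat \<Rightarrow> (nat list \<Rightarrow> real) \<Rightarrow> (nat list \<Rightarrow> nat \<Rightarrow> real)
                   \<Rightarrow> (nat list \<Rightarrow> nat \<Rightarrow> real) set \<Rightarrow> real" where
  "dKL_set N S p q L = Inf (dKL N S p q ` L)"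

end

theory Submission imports Defs "HOL-Analysis.Analysis" begin

definition ce :: "nat \<Rightarrow> (nat \<Rightarrow> real) \<Rightarrow> (nat \<Rightarrow> real) \<Rightarrow> real" where
  "ce N a v = (\<Sum>i\<in>{1..N}. a i * (ln (\<Sum>j\<in>{1..N}. exp (v j)) - v i))"

lemma finite_ctxs: "finite (ctxs N S)"
proof -
  have "ctxs N S = {xs. set xs \<subseteq> {1..N} \<and> length xs = S}" unfolding ctxs_def by auto
  then show ?thesis using finite_lists_length_eq[of "{1..N}" S] by simp
qed

lemma sumexp_pos: "(N::nat) \<ge> 1 \<Longrightarrow> 0 < (\<Sum>j\<in>{1..N}. exp (v j :: real))"
  by (intro sum_pos) auto

lemma lnZ_ge: "i \<in> {1..(N::nat)} \<Longrightarrow> v i \<le> ln (\<Sum>j\<in>{1..N}. exp (v j :: real))"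
proof -
  assume i: "i \<in> {1..N}"
  have "exp (v i) \<le> (\<Sum>j\<in>{1..N}. exp (v j))"
    by (rule member_le_sum[OF i]) auto
  then show ?thesis by (metis exp_gt_zero ln_exp ln_le_cancel_iff less_le_trans)
qed

lemma ce_term_nonneg: "(a i::real) \<ge> 0 \<Longrightarrow> i \<in> {1..(N::nat)} \<Longrightarrow> 0 \<le> a i * (ln (\<Sum>j\<in>{1..N}. exp (v j)) - v i)"
  using lnZ_ge[of i N v] by simp

lemma ce_nonneg: "(\<forall>i\<in>{1..N}. a i \<ge> 0) \<Longrightarrow> 0 \<le> ce N a v"
  unfolding ce_def by (intro sum_nonneg ce_term_nonneg) auto

lemma ce_term_le: "(\<forall>i\<in>{1..N}. a i \<ge> 0) \<Longrightarrow> i \<in> {1..N} \<Longrightarrow> a i * (ln (\<Sum>j\<in>{1..N}. exp (v j)) - v i) \<le> ce N a v"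
  unfolding ce_def
  apply (rule member_le_sum)
  subgoal by simp
  subgoal for x by (rule ce_term_nonneg) auto
  by simp

lemma ce_cong: "(\<forall>i\<in>{1..N}. w i = v i) \<Longrightarrow> ce N a w = ce N a v"
  unfolding ce_def by (intro sum.cong refl) (auto intro!: arg_cong[where f=ln] sum.cong)

lemma ce_shift: "(\<forall>i\<in>{1..N}. w i = v i - c) \<Longrightarrow> N \<ge> 1 \<Longrightarrow> ce N a w = ce N a v"
proof -
  assume h: "\<forall>i\<in>{1..N}. w i = v i - c" and N: "N \<ge> 1"
  have "(\<Sum>j\<in>{1..N}. exp (w j)) = (\<Sum>j\<in>{1..N}. exp (v j)) / exp c"
    using h by (simp add: exp_diff sum_divide_distrib)
  then have "ln (\<Sum>j\<in>{1..N}. exp (w j)) = ln (\<Sum>j\<in>{1..N}. exp (v j)) - c"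
    using sumexp_pos[OF N, of v] by (simp add: ln_div)
  then show ?thesis unfolding ce_def using h by (intro sum.cong refl) auto
qed

lemma KL_eq:
  assumes N: "N \<ge> 1" and a: "\<forall>i\<in>{1..N}. a i > 0"
  shows "KL N a (softmax N v) = (\<Sum>i\<in>{1..N}. a i * ln (a i)) + ce N a v"
proof -
  have "KL N a (softmax N v) = (\<Sum>i\<in>{1..N}. a i * ln (a i) + a i * (ln (\<Sum>j\<in>{1..N}. exp (v j)) - v i))"
    unfolding KL_def
  proof (intro sum.cong refl)
    fix i assume i: "i \<in> {1..N}"
    have pos: "0 < (\<Sum>j\<in>{1..N}. exp (v j))" by (rule sumexp_pos[OF N])
    have ai: "a i > 0" using a i by auto
    have eq: "ln (a i / softmax N v i) = ln (a i) - (v i - ln (\<Sum>j\<in>{1..N}. exp (v j)))"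
      unfolding softmax_def using ai pos by (simp add: ln_div ln_mult)
    then show "(if a i = 0 then 0 else a i * ln (a i / softmax N v i)) =
        a i * ln (a i) + a i * (ln (\<Sum>j\<in>{1..N}. exp (v j)) - v i)"
    proof -
      have "(if a i = 0 then 0 else a i * ln (a i / softmax N v i)) = a i * ln (a i / softmax N v i)"
        using ai by simp
      also have "\<dots> = a i * (ln (a i) - (v i - ln (\<Sum>j\<in>{1..N}. exp (v j))))" by (simp only: eq)
      also have "\<dots> = a i * ln (a i) + a i * (ln (\<Sum>j\<in>{1..N}. exp (v j)) - v i)" by (simp add: algebra_simps)
      finally show ?thesis .
    qed
  qed
  then show ?thesis unfolding ce_def by (simp add: sum.distrib)
qed

lemma dKL_eq:
  assumes N: "N \<ge> 1" and nt: "next_token_dist N S p q"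
    and nz: "\<forall>t\<in>ctxs N S. \<forall>j\<in>{1..N}. q t j \<noteq> 0"
  shows "dKL N S p q f = (\<Sum>t\<in>ctxs N S. p t * (\<Sum>i\<in>{1..N}. q t i * ln (q t i)))
           + (\<Sum>t\<in>ctxs N S. p t * ce N (q t) (f t))"
proof -
  have "p t * KL N (q t) (softmax N (f t)) = p t * (\<Sum>i\<in>{1..N}. q t i * ln (q t i)) + p t * ce N (q t) (f t)"
    if t: "t \<in> ctxs N S" for t
  proof -
    have "\<forall>i\<in>{1..N}. q t i > 0" using nt nz t unfolding next_token_dist_def
      by (metis less_eq_real_def)
    then show ?thesis using KL_eq[OF N] by (simp add: distrib_left)
  qed
  then show ?thesis unfolding dKL_def by (simp add: sum.distrib)
qed

lemma gs:
  fixes W :: "nat \<Rightarrow> nat \<Rightarrow> real"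
  shows "\<exists>U A. (\<forall>i\<in>{1..N}. \<forall>k\<in>{1..d}. W i k = (\<Sum>j\<in>{1..d}. U i j * A j k)) \<and>
     (\<forall>j\<in>{1..d}. \<forall>j'\<in>{1..d}. j \<noteq> j' \<longrightarrow> (\<Sum>i\<in>{1..N}. U i j * U i j') = 0) \<and>
     (\<forall>j\<in>{1..d}. (\<Sum>i\<in>{1..N}. U i j * U i j) = 1 \<or> (\<forall>i\<in>{1..N}. U i j = 0))"
proof (induction d)
  case 0 show ?case by auto
next
  case (Suc d)
  then obtain U A where hW: "\<forall>i\<in>{1..N}. \<forall>k\<in>{1..d}. W i k = (\<Sum>j\<in>{1..d}. U i j * A j k)"
    and ho: "\<forall>j\<in>{1..d}. \<forall>j'\<in>{1..d}. j \<noteq> j' \<longrightarrow> (\<Sum>i\<in>{1..N}. U i j * U i j') = 0"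
    and hn: "\<forall>j\<in>{1..d}. (\<Sum>i\<in>{1..N}. U i j * U i j) = 1 \<or> (\<forall>i\<in>{1..N}. U i j = 0)" by blast
  define w where "w i = W i (Suc d)" for i
  define c where "c j = (\<Sum>i\<in>{1..N}. U i j * w i)" for j
  define r where "r i = w i - (\<Sum>j\<in>{1..d}. c j * U i j)" for i
  define nr where "nr = sqrt (\<Sum>i\<in>{1..N}. r i * r i)"
  define U' where "U' i j = (if j = Suc d then (if nr = 0 then 0 else r i / nr) else U i j)" for i j
  define A' where "A' j k = (if k = Suc d then (if j = Suc d then nr else c j) else if j = Suc d then 0 else A j k)" for j k
  have orth: "(\<Sum>i\<in>{1..N}. U i j * r i) = 0" if j: "j \<in> {1..d}" for j
  proof -
    have "(\<Sum>i\<in>{1..N}. U i j * r i) = c j - (\<Sum>i\<in>{1..N}. \<Sum>j'\<in>{1..d}. c j' * (U i j * U i j'))"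
      by (simp add: r_def c_def right_diff_distrib sum_subtractf sum_distrib_left mult_ac)
    also have "(\<Sum>i\<in>{1..N}. \<Sum>j'\<in>{1..d}. c j' * (U i j * U i j')) = (\<Sum>j'\<in>{1..d}. c j' * (\<Sum>i\<in>{1..N}. U i j * U i j'))"
      by (subst sum.swap) (simp add: sum_distrib_left)
    also have "\<dots> = c j * (\<Sum>i\<in>{1..N}. U i j * U i j)"
    proof -
      have "(\<Sum>j'\<in>{1..d}. c j' * (\<Sum>i\<in>{1..N}. U i j * U i j')) = c j * (\<Sum>i\<in>{1..N}. U i j * U i j) + (\<Sum>j'\<in>{1..d}-{j}. c j' * (\<Sum>i\<in>{1..N}. U i j * U i j'))"
        using j by (simp add: sum.remove)
      also have "(\<Sum>j'\<in>{1..d}-{j}. c j' * (\<Sum>i\<in>{1..N}. U i j * U i j')) = 0"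
        using ho j by (intro sum.neutral) auto
      finally show ?thesis by simp
    qed
    finally have "(\<Sum>i\<in>{1..N}. U i j * r i) = c j - c j * (\<Sum>i\<in>{1..N}. U i j * U i j)" .
    moreover have "(\<forall>i\<in>{1..N}. U i j = 0) \<Longrightarrow> c j = 0" by (simp add: c_def)
    ultimately show ?thesis using hn j by auto
  qed
  have r0: "r i = 0" if "nr = 0" "i \<in> {1..N}" for i
  proof -
    have "(\<Sum>i\<in>{1..N}. r i * r i) = 0" using that(1) unfolding nr_def
      by (simp add: sum_nonneg)
    then have "\<forall>i\<in>{1..N}. r i * r i = 0" by (subst (asm) sum_nonneg_eq_0_iff) auto
    then show ?thesis using that(2) by auto
  qed
  have r1: "(\<Sum>i\<in>{1..N}. (r i / nr) * (r i / nr)) = 1" if "nr \<noteq> 0"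
  proof -
    have h: "nr * nr = (\<Sum>i\<in>{1..N}. r i * r i)" unfolding nr_def
      by (simp add: sum_nonneg)
    have "(\<Sum>i\<in>{1..N}. (r i / nr) * (r i / nr)) = (\<Sum>i\<in>{1..N}. r i * r i) / (nr * nr)"
      by (simp add: sum_divide_distrib[symmetric])
    also have "\<dots> = 1" using that h[symmetric] by simp
    finally show ?thesis .
  qed
  have ins: "{1..Suc d} = insert (Suc d) {1..d}" by auto
  have P1: "\<forall>i\<in>{1..N}. \<forall>k\<in>{1..Suc d}. W i k = (\<Sum>j\<in>{1..Suc d}. U' i j * A' j k)"
  proof (intro ballI)
    fix i k assume i: "i \<in> {1..N}" and k: "k \<in> {1..Suc d}"
    have e: "(\<Sum>j\<in>{1..Suc d}. U' i j * A' j k) = U' i (Suc d) * A' (Suc d) k + (\<Sum>j\<in>{1..d}. U i j * A' j k)"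
      unfolding ins by (simp add: U'_def)
    show "W i k = (\<Sum>j\<in>{1..Suc d}. U' i j * A' j k)"
    proof (cases "k = Suc d")
      case True
      have "(\<Sum>j\<in>{1..d}. U i j * A' j k) = w i - r i" using True
        by (simp add: A'_def r_def mult.commute)
      moreover have "U' i (Suc d) * A' (Suc d) k = r i" using True r0[OF _ i]
        by (auto simp: U'_def A'_def)
      ultimately show ?thesis unfolding e using True by (simp add: w_def)
    next
      case False
      then have "k \<in> {1..d}" using k by auto
      then show ?thesis unfolding e using hW i False by (simp add: A'_def)
    qed
  qed
  have P2: "\<forall>j\<in>{1..Suc d}. \<forall>j'\<in>{1..Suc d}. j \<noteq> j' \<longrightarrow> (\<Sum>i\<in>{1..N}. U' i j * U' i j') = 0"
  proof (intro ballI impI)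
    fix j j' assume j: "j \<in> {1..Suc d}" and j': "j' \<in> {1..Suc d}" and ne: "j \<noteq> j'"
    have o1: "(\<Sum>i\<in>{1..N}. U i a * U' i (Suc d)) = 0" if "a \<in> {1..d}" for a
    proof (cases "nr = 0")
      case True then show ?thesis by (simp add: U'_def)
    next
      case False
      then have "(\<Sum>i\<in>{1..N}. U i a * U' i (Suc d)) = (\<Sum>i\<in>{1..N}. U i a * r i) / nr"
        by (simp add: U'_def sum_divide_distrib)
      then show ?thesis using orth[OF that] by simp
    qed
    show "(\<Sum>i\<in>{1..N}. U' i j * U' i j') = 0"
    proof (cases "j = Suc d")
      case True
      then have "j' \<in> {1..d}" using j' ne by auto
      then show ?thesis using o1[of j'] True ne by (simp add: U'_def mult.commute)
    next
      case False
      then have jj: "j \<in> {1..d}" using j by auto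
      show ?thesis
      proof (cases "j' = Suc d")
        case True then show ?thesis using o1[OF jj] False by (simp add: U'_def)
      next
        case False
        then have "j' \<in> {1..d}" using j' by auto
        then show ?thesis using ho jj ne False \<open>j \<noteq> Suc d\<close> by (simp add: U'_def)
      qed
    qed
  qed
  have P3: "\<forall>j\<in>{1..Suc d}. (\<Sum>i\<in>{1..N}. U' i j * U' i j) = 1 \<or> (\<forall>i\<in>{1..N}. U' i j = 0)"
  proof
    fix j assume j: "j \<in> {1..Suc d}"
    show "(\<Sum>i\<in>{1..N}. U' i j * U' i j) = 1 \<or> (\<forall>i\<in>{1..N}. U' i j = 0)"
    proof (cases "j = Suc d")
      case True then show ?thesis using r1 by (auto simp: U'_def)
    next
      case False
      then have "j \<in> {1..d}" using j by auto
      then show ?thesis using hn False by (simp add: U'_def)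
    qed
  qed
  show ?case using P1 P2 P3 by blast
qed

lemma compact_PiE_UNIV:
  fixes S :: "'a \<Rightarrow> 'b::topological_space set"
  assumes "\<And>i. compact (S i)"
  shows "compact (Pi\<^sub>E UNIV S)"
proof -
  have "compactin (product_topology (\<lambda>i. euclidean) UNIV) (Pi\<^sub>E UNIV S)"
    using assms by (simp add: compactin_PiE compactin_euclidean_iff)
  then show ?thesis by (simp add: euclidean_product_topology compactin_euclidean_iff)
qed

lemma cont_G:
  fixes a :: "nat list \<Rightarrow> nat \<Rightarrow> real" and C :: "nat list set"
  assumes "N \<ge> 1"
  shows "continuous_on UNIV (\<lambda>x::(nat \<Rightarrow> nat \<Rightarrow> real) \<times> (nat list \<Rightarrow> nat \<Rightarrow> real).
     \<Sum>t\<in>C. p t * ce N (a t) (f_WE d (fst x) (snd x) t))"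
proof -
  have c1: "continuous_on UNIV (\<lambda>x::(nat \<Rightarrow> nat \<Rightarrow> real) \<times> (nat list \<Rightarrow> nat \<Rightarrow> real). fst x j k)" for j k
    apply (rule continuous_on_product_then_coordinatewise[where f="\<lambda>x. fst x j"])
    apply (rule continuous_on_product_then_coordinatewise[where f="\<lambda>x. fst x"])
    by (rule continuous_on_fst[OF continuous_on_id])
  have c2: "continuous_on UNIV (\<lambda>x::(nat \<Rightarrow> nat \<Rightarrow> real) \<times> (nat list \<Rightarrow> nat \<Rightarrow> real). snd x j k)" for j k
    apply (rule continuous_on_product_then_coordinatewise[where f="\<lambda>x. snd x j"])
    apply (rule continuous_on_product_then_coordinatewise[where f="\<lambda>x. snd x"])
    by (rule continuous_on_snd[OF continuous_on_id])
  show ?thesis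
  unfolding ce_def f_WE_def
  apply (intro continuous_on_sum continuous_on_mult continuous_on_const continuous_on_diff continuous_on_ln continuous_on_exp c1 c2)
  apply auto
  subgoal for t i a b using sumexp_pos[OF assms, of "\<lambda>j. \<Sum>k=1..d. a j k * b t k"] by simp
  done
qed

lemma proj:
  fixes U :: "nat \<Rightarrow> nat \<Rightarrow> real"
  assumes ho: "\<forall>j\<in>{1..d}. \<forall>j'\<in>{1..d}. j \<noteq> j' \<longrightarrow> (\<Sum>i\<in>{1..N}. U i j * U i j') = 0"
    and j: "j \<in> {1..d}"
  shows "(\<Sum>i\<in>{1..N}. U i j * (\<Sum>j'\<in>{1..d}. U i j' * g j')) = g j * (\<Sum>i\<in>{1..N}. U i j * U i j)"
proof -
  have "(\<Sum>i\<in>{1..N}. U i j * (\<Sum>j'\<in>{1..d}. U i j' * g j')) = (\<Sum>i\<in>{1..N}. \<Sum>j'\<in>{1..d}. g j' * (U i j * U i j'))"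
    by (simp add: sum_distrib_left mult_ac)
  also have "\<dots> = (\<Sum>j'\<in>{1..d}. g j' * (\<Sum>i\<in>{1..N}. U i j * U i j'))"
    by (subst sum.swap) (simp add: sum_distrib_left)
  also have "\<dots> = g j * (\<Sum>i\<in>{1..N}. U i j * U i j) + (\<Sum>j'\<in>{1..d}-{j}. g j' * (\<Sum>i\<in>{1..N}. U i j * U i j'))"
    using j by (simp add: sum.remove)
  also have "(\<Sum>j'\<in>{1..d}-{j}. g j' * (\<Sum>i\<in>{1..N}. U i j * U i j')) = 0"
    using ho j by (intro sum.neutral) auto
  finally show ?thesis by simp
qed

theorem lemma1:
  fixes N S d :: nat
    and p :: "nat list \<Rightarrow> real" and q :: "nat list \<Rightarrow> nat \<Rightarrow> real"
  assumes "N \<ge> 1" "S \<ge> 1" "d \<ge> 1"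
    and "next_token_dist N S p q"
    and "\<forall>t\<in>ctxs N S. \<forall>j\<in>{1..N}. q t j \<noteq> 0"
  shows "\<exists>f\<in>seq_encoders N S d. dKL N S p q f = dKL_set N S p q (seq_encoders N S d)"
proof -
  define C where "C = ctxs N S"
  have fin: "finite C" by (simp add: C_def finite_ctxs)
  have N: "N \<ge> 1" using assms(1) .
  have pnn: "\<forall>t\<in>C. p t \<ge> 0" and qnn: "\<forall>t\<in>C. \<forall>i\<in>{1..N}. q t i \<ge> 0"
    using assms(4) unfolding C_def next_token_dist_def by auto
  have qpos: "q t i > 0" if "t \<in> C" "i \<in> {1..N}" for t i
    using qnn assms(5) that unfolding C_def by (metis less_eq_real_def)
  define H where "H = (\<Sum>t\<in>C. p t * (\<Sum>i\<in>{1..N}. q t i * ln (q t i)))"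
  define \<Phi> where "\<Phi> f = (\<Sum>t\<in>C. p t * ce N (q t) (f t))" for f :: "nat list \<Rightarrow> nat \<Rightarrow> real"
  have obj: "dKL N S p q f = H + \<Phi> f" for f
    using dKL_eq[OF N assms(4) assms(5)] by (simp add: H_def \<Phi>_def C_def)
  have \<Phi>nn_term: "0 \<le> p t * ce N (q t) (f t)" if "t \<in> C" for t f
    using pnn qnn ce_nonneg that by simp
  have \<Phi>_cong: "\<Phi> f = \<Phi> g" if "\<forall>t\<in>C. \<forall>i\<in>{1..N}. f t i = g t i" for f g
    unfolding \<Phi>_def using that by (intro sum.cong refl) (simp add: ce_cong)
  define z where "z = (\<lambda>(t::nat list) (i::nat). 0::real)"
  define D where "D = \<Phi> z"
  have D0: "0 \<le> D" unfolding D_def \<Phi>_def by (intro sum_nonneg \<Phi>nn_term)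
  define Lall where "Lall = (\<Sum>t\<in>C. \<Sum>i\<in>{1..N}. if p t = 0 then 0 else D / (p t * q t i))"
  have Lterm_nn: "0 \<le> (if p t = 0 then 0 else D / (p t * q t i))" if "t \<in> C" "i \<in> {1..N}" for t i
    using D0 pnn qnn that by simp
  have Lall_ge: "(if p t = 0 then 0 else D / (p t * q t i)) \<le> Lall" if t: "t \<in> C" and i: "i \<in> {1..N}" for t i
  proof -
    have "(if p t = 0 then 0 else D / (p t * q t i)) \<le> (\<Sum>i\<in>{1..N}. if p t = 0 then 0 else D / (p t * q t i))"
      by (rule member_le_sum[OF i]) (use Lterm_nn t in auto)
    also have "\<dots> \<le> Lall" unfolding Lall_def
      by (rule member_le_sum[OF t]) (use fin Lterm_nn in \<open>auto intro!: sum_nonneg\<close>)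
    finally show ?thesis .
  qed
  have Lall0: "0 \<le> Lall" unfolding Lall_def using Lterm_nn by (intro sum_nonneg) auto
  define B where "B = real N * Lall"
  have B0: "0 \<le> B" using Lall0 by (simp add: B_def)
  define KU where "KU = (Pi\<^sub>E UNIV (\<lambda>i. Pi\<^sub>E UNIV (\<lambda>j. if i \<in> {1..N} \<and> j \<in> {1..d} then {-1..1} else {0::real})) :: (nat \<Rightarrow> nat \<Rightarrow> real) set)"
  define KE where "KE = (Pi\<^sub>E UNIV (\<lambda>t. Pi\<^sub>E UNIV (\<lambda>j. if t \<in> C \<and> j \<in> {1..d} then {-B..B} else {0::real})) :: (nat list \<Rightarrow> nat \<Rightarrow> real) set)"
  define K where "K = KU \<times> KE"
  have cK: "compact K" unfolding K_def KU_def KE_def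
    by (intro compact_Times compact_PiE_UNIV) auto
  have z0: "((\<lambda>i j. 0), (\<lambda>t j. 0)) \<in> K" using B0 by (auto simp: K_def KU_def KE_def PiE_UNIV_domain)
  define G where "G x = \<Phi> (f_WE d (fst x) (snd x))" for x
  have cG: "continuous_on K G" unfolding G_def \<Phi>_def
    by (rule continuous_on_subset[OF cont_G[OF N]]) auto
  obtain x0 where x0: "x0 \<in> K" "\<forall>y\<in>K. G x0 \<le> G y"
    using continuous_attains_inf[OF cK _ cG] z0 by blast
  define f0 where "f0 = f_WE d (fst x0) (snd x0)"
  have f0L: "f0 \<in> seq_encoders N S d" unfolding seq_encoders_def f0_def by blast
  have Gz: "G ((\<lambda>i j. 0), (\<lambda>t j. 0)) = D" unfolding G_def D_def z_def f_WE_def by simp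
  have key: "\<exists>y\<in>K. G y = \<Phi> (f_WE d W E)" if hle: "\<Phi> (f_WE d W E) \<le> D" for W E
  proof -
    define W' where "W' i k = W i k - (\<Sum>i'\<in>{1..N}. W i' k) / real N" for i k
    define E' where "E' t k = (if p t = 0 then 0 else E t k)" for t k
    define M where "M = f_WE d W' E'"
    define g where "g = f_WE d W E"
    have Mshift: "M t i = g t i - (\<Sum>k\<in>{1..d}. (\<Sum>i'\<in>{1..N}. W i' k) / real N * E t k)" if "p t \<noteq> 0" for t i
      using that unfolding M_def g_def f_WE_def W'_def E'_def by (simp add: left_diff_distrib sum_subtractf)
    have \<Phi>M: "\<Phi> M = \<Phi> g" unfolding \<Phi>_def
    proof (intro sum.cong refl)
      fix t assume t: "t \<in> C"
      show "p t * ce N (q t) (M t) = p t * ce N (q t) (g t)"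
      proof (cases "p t = 0")
        case False
        then have "ce N (q t) (M t) = ce N (q t) (g t)"
          using Mshift by (intro ce_shift[OF _ N]) auto
        then show ?thesis by simp
      qed simp
    qed
    have cent: "(\<Sum>i\<in>{1..N}. M t i) = 0" for t
    proof -
      have sW: "(\<Sum>i\<in>{1..N}. W' i k) = 0" for k using N by (simp add: W'_def sum_subtractf)
      have "(\<Sum>i\<in>{1..N}. M t i) = (\<Sum>k\<in>{1..d}. (\<Sum>i\<in>{1..N}. W' i k) * E' t k)"
        unfolding M_def f_WE_def by (subst sum.swap) (simp add: sum_distrib_right)
      then show ?thesis using sW by simp
    qed
    have bnd: "\<bar>M t i\<bar> \<le> Lall" if t: "t \<in> C" and i: "i \<in> {1..N}" for t i
    proof (cases "p t = 0")
      case True then have "M t i = 0" by (simp add: M_def f_WE_def E'_def)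
      then show ?thesis using Lall0 by simp
    next
      case False
      then have pt: "p t > 0" using pnn t by force
      define Z where "Z = ln (\<Sum>j\<in>{1..N}. exp (M t j))"
      have "p t * ce N (q t) (M t) \<le> \<Phi> M" unfolding \<Phi>_def
        by (rule member_le_sum[OF t]) (use \<Phi>nn_term fin in auto)
      then have ce_le: "p t * ce N (q t) (M t) \<le> D" using \<Phi>M hle g_def by simp
      have low: "Z - M t i' \<le> Lall" if i': "i' \<in> {1..N}" for i'
      proof -
        have "q t i' * (Z - M t i') \<le> ce N (q t) (M t)" unfolding Z_def
          using ce_term_le qnn t i' by blast
        then have "p t * (q t i' * (Z - M t i')) \<le> D"
          using ce_le pt by (meson mult_left_mono less_imp_le order_trans)
        then have "Z - M t i' \<le> D / (p t * q t i')" using pt qpos[OF t i']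
          by (simp add: field_simps)
        then show ?thesis using Lall_ge[OF t i'] False by simp
      qed
      have up: "M t j \<le> Z" if "j \<in> {1..N}" for j using lnZ_ge[OF that] Z_def by simp
      have "real N * M t i = (\<Sum>j\<in>{1..N}. M t i - M t j)"
        using cent[of t] by (simp add: sum_subtractf)
      moreover have "(\<Sum>j\<in>{1..N}. M t i - M t j) \<le> (\<Sum>j\<in>{1..N}. Lall)"
        by (intro sum_mono) (use low up[OF i] in force)
      moreover have "(\<Sum>j\<in>{1..N}. - Lall) \<le> (\<Sum>j\<in>{1..N}. M t i - M t j)"
        by (intro sum_mono) (use low[OF i] up in force)
      ultimately have a1: "real N * M t i \<le> real N * Lall" and a2: "real N * (- Lall) \<le> real N * M t i" by auto
      have Npos: "real N > 0" using N by simp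
      have "M t i \<le> Lall" using a1 Npos by (simp add: mult_le_cancel_left_pos)
      moreover have "- Lall \<le> M t i" using a2 Npos by (simp only: mult_le_cancel_left_pos)
      ultimately show ?thesis by (simp add: abs_le_iff)
    qed
    obtain U A where hW: "\<forall>i\<in>{1..N}. \<forall>k\<in>{1..d}. W' i k = (\<Sum>j\<in>{1..d}. U i j * A j k)"
      and ho: "\<forall>j\<in>{1..d}. \<forall>j'\<in>{1..d}. j \<noteq> j' \<longrightarrow> (\<Sum>i\<in>{1..N}. U i j * U i j') = 0"
      and hn: "\<forall>j\<in>{1..d}. (\<Sum>i\<in>{1..N}. U i j * U i j) = 1 \<or> (\<forall>i\<in>{1..N}. U i j = 0)"
      using gs[of N d W'] by blast
    define gg where "gg t j = (\<Sum>k\<in>{1..d}. A j k * E' t k)" for t j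
    have Mrep: "M t i = (\<Sum>j\<in>{1..d}. U i j * gg t j)" if "i \<in> {1..N}" for t i
    proof -
      have "M t i = (\<Sum>k\<in>{1..d}. (\<Sum>j\<in>{1..d}. U i j * A j k) * E' t k)"
        unfolding M_def f_WE_def using hW that by simp
      also have "\<dots> = (\<Sum>j\<in>{1..d}. U i j * gg t j)" unfolding gg_def
        by (simp add: sum_distrib_left sum_distrib_right mult.assoc) (rule sum.swap)
      finally show ?thesis .
    qed
    define e where "e t j = (if t \<in> C \<and> j \<in> {1..d} then (\<Sum>i\<in>{1..N}. U i j * M t i) else 0)" for t j
    define U0 where "U0 i j = (if i \<in> {1..N} \<and> j \<in> {1..d} then U i j else 0)" for i j
    have rec: "f_WE d U0 e t i = M t i" if t: "t \<in> C" and i: "i \<in> {1..N}" for t i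
    proof -
      have "f_WE d U0 e t i = (\<Sum>j\<in>{1..d}. U i j * (gg t j * (\<Sum>i'\<in>{1..N}. U i' j * U i' j)))"
        unfolding f_WE_def
      proof (intro sum.cong refl)
        fix j assume j: "j \<in> {1..d}"
        have "(\<Sum>i'\<in>{1..N}. U i' j * M t i') = (\<Sum>i'\<in>{1..N}. U i' j * (\<Sum>j'\<in>{1..d}. U i' j' * gg t j'))"
          using Mrep by simp
        also have "\<dots> = gg t j * (\<Sum>i'\<in>{1..N}. U i' j * U i' j)" by (rule proj[OF ho j])
        finally show "U0 i j * e t j = U i j * (gg t j * (\<Sum>i'\<in>{1..N}. U i' j * U i' j))"
          using t i j by (simp add: U0_def e_def)
      qed
      also have "\<dots> = (\<Sum>j\<in>{1..d}. U i j * gg t j)"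
      proof (intro sum.cong refl)
        fix j assume j: "j \<in> {1..d}"
        from hn j consider "(\<Sum>i'\<in>{1..N}. U i' j * U i' j) = 1" | "\<forall>i'\<in>{1..N}. U i' j = 0" by blast
        then show "U i j * (gg t j * (\<Sum>i'\<in>{1..N}. U i' j * U i' j)) = U i j * gg t j"
          by cases (use i in auto)
      qed
      also have "\<dots> = M t i" using Mrep i by simp
      finally show ?thesis .
    qed
    have U1: "\<bar>U i j\<bar> \<le> 1" if "i \<in> {1..N}" "j \<in> {1..d}" for i j
    proof -
      from hn that(2) consider "(\<Sum>i'\<in>{1..N}. U i' j * U i' j) = 1" | "\<forall>i'\<in>{1..N}. U i' j = 0" by blast
      then show ?thesis
      proof cases
        case 1
        have "U i j * U i j \<le> (\<Sum>i'\<in>{1..N}. U i' j * U i' j)" by (rule member_le_sum[OF that(1)]) auto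
        then have "U i j ^ 2 \<le> 1" using 1 by (simp add: power2_eq_square)
        then show ?thesis by (simp add: abs_square_le_1)
      next
        case 2 then show ?thesis using that by simp
      qed
    qed
    have eB: "\<bar>e t j\<bar> \<le> B" for t j
    proof (cases "t \<in> C \<and> j \<in> {1..d}")
      case True
      have "\<bar>\<Sum>i\<in>{1..N}. U i j * M t i\<bar> \<le> (\<Sum>i\<in>{1..N}. \<bar>U i j * M t i\<bar>)" by (rule sum_abs)
      also have "\<dots> \<le> (\<Sum>i\<in>{1..N}. Lall)"
      proof (intro sum_mono)
        fix i assume i: "i \<in> {1..N}"
        have "\<bar>U i j\<bar> * \<bar>M t i\<bar> \<le> 1 * Lall"
          using U1[OF i] bnd[OF _ i] True by (intro mult_mono) auto
        then show "\<bar>U i j * M t i\<bar> \<le> Lall" by (simp add: abs_mult)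
      qed
      also have "\<dots> = B" by (simp add: B_def)
      finally show ?thesis using True by (simp add: e_def)
    next
      case False then have "e t j = 0" unfolding e_def by meson
      then show ?thesis using B0 by simp
    qed
    have "U0 \<in> KU" unfolding KU_def PiE_UNIV_domain
    proof (intro Pi_I)
      fix i j
      show "U0 i j \<in> (if i \<in> {1..N} \<and> j \<in> {1..d} then {-1..1} else {0::real})"
        using U1[of i j] by (auto simp: U0_def abs_le_iff)
    qed
    moreover have "e \<in> KE" unfolding KE_def PiE_UNIV_domain
    proof (intro Pi_I)
      fix t j
      show "e t j \<in> (if t \<in> C \<and> j \<in> {1..d} then {-B..B} else {0::real})"
      proof (cases "t \<in> C \<and> j \<in> {1..d}")
        case True then show ?thesis using eB[of t j] by (simp add: abs_le_iff)
      next
        case False then have "e t j = 0" unfolding e_def by meson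
        then show ?thesis using False B0 by simp
      qed
    qed
    ultimately have "(U0, e) \<in> K" unfolding K_def by simp
    moreover have "G (U0, e) = \<Phi> g"
      unfolding G_def using \<Phi>_cong[of "f_WE d U0 e" M] rec \<Phi>M by simp
    ultimately show ?thesis unfolding g_def by blast
  qed

  have minimal: "dKL N S p q f0 \<le> dKL N S p q g" if gL: "g \<in> seq_encoders N S d" for g
  proof -
    obtain W E where g: "g = f_WE d W E" using gL unfolding seq_encoders_def by blast
    show ?thesis
    proof (cases "\<Phi> g \<le> D")
      case True then obtain y where "y \<in> K" "G y = \<Phi> g" using key g by blast
      then show ?thesis using x0 obj[of f0] obj[of g] unfolding f0_def G_def by force
    next
      case False then show ?thesis using x0 z0 Gz obj[of f0] obj[of g] unfolding f0_def G_def by force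
    qed
  qed
  have "dKL_set N S p q (seq_encoders N S d) = dKL N S p q f0"
    unfolding dKL_set_def by (rule cInf_eq_minimum) (use f0L minimal in auto)
  then show ?thesis using f0L by auto
qed

end
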